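(* Let $t,t'$ be graph monomials in $\mathcal{D}$ with vertex sets $V,V'$ and roots $\rho,\rho'$, and let $T=\tilde\Delta(tt')$, whose vertex set is $(V\sqcup V')/(\rho\sim\rho')$. Let $\pi$ be a partition of the vertex set of $T$ such that no block of $\pi$ contains two distinct vertices of $V$ and no block contains two distinct vertices of $V'$, and suppose that $T^\pi$ is an oriented cactus. Then every block of $\pi$ consists of exactly one vertex of $V$ and one vertex of $V'$ (the root block being $\{\rho=\rho'\}$), so $\pi$ induces a bijection $f_\pi:V\to V'$ with $v\overset{\pi}{\sim}f_\pi(v)$, and $f_\pi$ reverses adjacency: for $v,w\in V$, $t$ has an edge from $v$ to $w$ if and only if $t'$ has an edge from $f_\pi(w)$ to $f_\pi(v)$.
   Context: $(\mathcal{A},\varphi)$ is a tracial noncommutative probability space (unital complex algebra, unital tracial functional). A graph monomial in $\mathcal{A}$ is a finite connected directed multigraph with distinguished, not necessarily distinct, vertices $v_{\mathrm{in}},v_{\mathrm{out}}$ and edge labels in $\mathcal{A}$. The product $tt'$ identifies the input of $t$ with the output of $t'$; $\tilde\Delta(s)$ is the unrooted labelled graph obtained from $s$ by identifying its input and output. For a partition $\pi$ of the vertices, $T^\pi$ identifies the vertices in each block. A cactus is a connected multigraph with every edge in exactly one simple cycle (loops and pairs of parallel edges count as cycles); an oriented cactus is a directed multigraph whose underlying multigraph is a cactus and all of whose simple cycles are directed cycles. $\mathcal{D}$ is the set of graph monomials with $v_{\mathrm{in}}=v_{\mathrm{out}}$ (the root) such that: (A1) the underlying undirected graph is a tree; (A2)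 the root has degree $1$; (A3) no edge is labelled by a scalar multiple of $1_{\mathcal{A}}$; (A4) no vertex has both indegree and outdegree equal to one. *)

theory Defs
  imports Complex_Main "HOL-Library.Disjoint_Sets"
begin

text \<open>A unital complex algebra is modelled as a type of class ring_1 together with
a scalar multiplication by complex numbers satisfying the algebra axioms.\<close>

definition complex_algebra :: "(complex \<Rightarrow> 'a::ring_1 \<Rightarrow> 'a) \<Rightarrow> bool" where
  "complex_algebra sc \<longleftrightarrow>
     (\<forall>c x y. sc c (x + y) = sc c x + sc c y) \<and>
     (\<forall>c d x. sc (c + d) x = sc c x + sc d x) \<and>
     (\<forall>c d x. sc (c * d) x = sc c (sc d x)) \<and>
     (\<forall>x. sc 1 x = x) \<and>
     (\<forall>c x y. sc c (x * y) = sc c x * y \<and> sc c (x * y) = x * sc c y)"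

definition tracial_ncps :: "(complex \<Rightarrow> 'a::ring_1 \<Rightarrow> 'a) \<Rightarrow> ('a \<Rightarrow> complex) \<Rightarrow> bool" where
  "tracial_ncps sc phi \<longleftrightarrow> complex_algebra sc \<and>
     (\<forall>x y. phi (x + y) = phi x + phi y) \<and> (\<forall>c x. phi (sc c x) = c * phi x) \<and>
     phi 1 = 1 \<and> (\<forall>x y. phi (x * y) = phi (y * x))"

datatype ('v, 'e, 'a) gm =
  GM (verts: "'v set") (edges: "'e set") (src: "'e \<Rightarrow> 'v") (tgt: "'e \<Rightarrow> 'v")
     (lab: "'e \<Rightarrow> 'a") (vin: 'v) (vout: 'v)

definition uadj :: "('v, 'e, 'a) gm \<Rightarrow> ('v \<times> 'v) set" where
  "uadj G = {(src G e, tgt G e) | e. e \<in> edges G}"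

definition connected_gm :: "('v, 'e, 'a) gm \<Rightarrow> bool" where
  "connected_gm G \<longleftrightarrow> (\<forall>u\<in>verts G. \<forall>v\<in>verts G. (u, v) \<in> (uadj G \<union> (uadj G)\<inverse>)\<^sup>*)"

definition graph_monomial :: "('v, 'e, 'a) gm \<Rightarrow> bool" where
  "graph_monomial G \<longleftrightarrow> finite (verts G) \<and> finite (edges G) \<and>
     src G ` edges G \<subseteq> verts G \<and> tgt G ` edges G \<subseteq> verts G \<and>
     vin G \<in> verts G \<and> vout G \<in> verts G \<and> connected_gm G"

text \<open>Simple cycles of the underlying undirected multigraph: vertices v_0..v_(n-1) distinct,
edges e_0..e_(n-1) distinct, e_i joining v_i and v_(i+1 mod n); n = 1 gives loops, n = 2
pairs of parallel edges.\<close>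
definition ucycle :: "('v, 'e, 'a) gm \<Rightarrow> 'v list \<Rightarrow> 'e list \<Rightarrow> bool" where
  "ucycle G vs es \<longleftrightarrow> es \<noteq> [] \<and> length vs = length es \<and> distinct vs \<and> distinct es \<and>
     set es \<subseteq> edges G \<and>
     (\<forall>i < length es. {src G (es ! i), tgt G (es ! i)} = {vs ! i, vs ! ((i + 1) mod length es)})"

definition dcycle :: "('v, 'e, 'a) gm \<Rightarrow> 'v list \<Rightarrow> 'e list \<Rightarrow> bool" where
  "dcycle G vs es \<longleftrightarrow> es \<noteq> [] \<and> length vs = length es \<and> distinct vs \<and> distinct es \<and>
     set es \<subseteq> edges G \<and>
     (\<forall>i < length es. src G (es ! i) = vs ! i \<and> tgt G (es ! i) = vs ! ((i + 1) mod length es))"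

text \<open>A simple cycle (as a subgraph) is determined by its edge set.\<close>
definition simple_cycles :: "('v, 'e, 'a) gm \<Rightarrow> 'e set set" where
  "simple_cycles G = {set es | vs es. ucycle G vs es}"

definition is_tree :: "('v, 'e, 'a) gm \<Rightarrow> bool" where
  "is_tree G \<longleftrightarrow> connected_gm G \<and> simple_cycles G = {}"

definition is_cactus :: "('v, 'e, 'a) gm \<Rightarrow> bool" where
  "is_cactus G \<longleftrightarrow> connected_gm G \<and>
     (\<forall>e\<in>edges G. \<exists>!C. C \<in> simple_cycles G \<and> e \<in> C)"

definition oriented_cactus :: "('v, 'e, 'a) gm \<Rightarrow> bool" where
  "oriented_cactus G \<longleftrightarrow> is_cactus G \<and>
     (\<forall>C\<in>simple_cycles G. \<exists>vs es. dcycle G vs es \<and> set es = C)"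

definition indeg :: "('v, 'e, 'a) gm \<Rightarrow> 'v \<Rightarrow> nat" where
  "indeg G v = card {e \<in> edges G. tgt G e = v}"

definition outdeg :: "('v, 'e, 'a) gm \<Rightarrow> 'v \<Rightarrow> nat" where
  "outdeg G v = card {e \<in> edges G. src G e = v}"

definition degree :: "('v, 'e, 'a) gm \<Rightarrow> 'v \<Rightarrow> nat" where
  "degree G v = indeg G v + outdeg G v"

text \<open>The class D (depends on the scalar multiplication, for condition A3).\<close>
definition in_D :: "(complex \<Rightarrow> 'a::ring_1 \<Rightarrow> 'a) \<Rightarrow> ('v, 'e, 'a) gm \<Rightarrow> bool" where
  "in_D sc t \<longleftrightarrow> graph_monomial t \<and> vin t = vout t \<and>
     is_tree t \<and>
     degree t (vin t) = 1 \<and>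
     (\<forall>e\<in>edges t. lab t e \<notin> range (\<lambda>c. sc c 1)) \<and>
     (\<forall>v\<in>verts t. \<not> (indeg t v = 1 \<and> outdeg t v = 1))"

definition blk :: "'v set set \<Rightarrow> 'v \<Rightarrow> 'v set" where
  "blk P x = (THE B. B \<in> P \<and> x \<in> B)"

definition quot :: "('v, 'e, 'a) gm \<Rightarrow> 'v set set \<Rightarrow> ('v set, 'e, 'a) gm" where
  "quot G P = GM P (edges G) (blk P \<circ> src G) (blk P \<circ> tgt G) (lab G)
                 (blk P (vin G)) (blk P (vout G))"

definition glue_part :: "'v set \<Rightarrow> 'v \<Rightarrow> 'v \<Rightarrow> 'v set set" where
  "glue_part A a b = insert {a, b} ((\<lambda>x. {x}) ` (A - {a, b}))"

definition dunion :: "('v, 'e, 'a) gm \<Rightarrow> ('w, 'f, 'a) gm \<Rightarrow> ('v + 'w, 'e + 'f, 'a) gm" where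
  "dunion t t' = GM (Inl ` verts t \<union> Inr ` verts t') (Inl ` edges t \<union> Inr ` edges t')
     (case_sum (Inl \<circ> src t) (Inr \<circ> src t')) (case_sum (Inl \<circ> tgt t) (Inr \<circ> tgt t'))
     (case_sum (lab t) (lab t')) (Inr (vin t')) (Inl (vout t))"

definition prod_part :: "('v, 'e, 'a) gm \<Rightarrow> ('w, 'f, 'a) gm \<Rightarrow> ('v + 'w) set set" where
  "prod_part t t' = glue_part (verts (dunion t t')) (Inl (vin t)) (Inr (vout t'))"

definition gprod :: "('v, 'e, 'a) gm \<Rightarrow> ('w, 'f, 'a) gm \<Rightarrow> (('v + 'w) set, 'e + 'f, 'a) gm" where
  "gprod t t' = quot (dunion t t') (prod_part t t')"

definition delta_part :: "('v, 'e, 'a) gm \<Rightarrow> 'v set set" where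
  "delta_part s = glue_part (verts s) (vin s) (vout s)"

text \<open>Delta-tilde(s): identify input and output (the distinguished vertices of the result
are irrelevant; both are the merged vertex).\<close>
definition delta :: "('v, 'e, 'a) gm \<Rightarrow> ('v set, 'e, 'a) gm" where
  "delta s = quot s (delta_part s)"

text \<open>Images of vertices of t (resp. t') as vertices of Delta-tilde(t t').\<close>
definition vl :: "('v, 'e, 'a) gm \<Rightarrow> ('w, 'f, 'a) gm \<Rightarrow> 'v \<Rightarrow> ('v + 'w) set set" where
  "vl t t' v = blk (delta_part (gprod t t')) (blk (prod_part t t') (Inl v))"

definition vr :: "('v, 'e, 'a) gm \<Rightarrow> ('w, 'f, 'a) gm \<Rightarrow> 'w \<Rightarrow> ('v + 'w) set set" where
  "vr t t' w = blk (delta_part (gprod t t')) (blk (prod_part t t') (Inr w))"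

end

theory Submission
  imports Defs
begin

definition adjS :: "('v, 'e, 'a) gm \<Rightarrow> 'e set \<Rightarrow> ('v \<times> 'v) set" where
  "adjS G S = {(x,y). \<exists>e\<in>S. (src G e = x \<and> tgt G e = y) \<or> (src G e = y \<and> tgt G e = x)}"

definition upath :: "('v, 'e, 'a) gm \<Rightarrow> 'e set \<Rightarrow> 'v list \<Rightarrow> 'e list \<Rightarrow> bool" where
  "upath G S xs fs \<longleftrightarrow> xs \<noteq> [] \<and> length xs = Suc (length fs) \<and> distinct xs \<and> distinct fs \<and>
     set fs \<subseteq> S \<and> (\<forall>j<length fs. {src G (fs!j), tgt G (fs!j)} = {xs!j, xs!Suc j})"

lemma adjS_iff: "(x,y) \<in> adjS G S \<longleftrightarrow> (\<exists>e\<in>S. {src G e, tgt G e} = {x,y})"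
  unfolding adjS_def by (auto simp: doubleton_eq_iff)

lemma adjS_sym: "(x,y) \<in> adjS G S \<Longrightarrow> (y,x) \<in> adjS G S"
  unfolding adjS_def by auto

lemma conn_sym: "(x,y) \<in> (adjS G S)\<^sup>* \<Longrightarrow> (y,x) \<in> (adjS G S)\<^sup>*"
proof (induction rule: rtrancl_induct)
  case base then show ?case by simp
next
  case (step y z)
  then show ?case by (meson adjS_sym converse_rtrancl_into_rtrancl)
qed

lemma adjS_mono: "S \<subseteq> S' \<Longrightarrow> (adjS G S)\<^sup>* \<subseteq> (adjS G S')\<^sup>*"
  by (rule rtrancl_mono) (auto simp: adjS_def)

lemma upath_mono: "upath G S xs fs \<Longrightarrow> S \<subseteq> S' \<Longrightarrow> upath G S' xs fs"
  unfolding upath_def by auto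

lemma upath_verts:
  assumes "upath G S xs fs" "hd xs \<in> V" "\<forall>e\<in>S. src G e \<in> V \<and> tgt G e \<in> V"
  shows "set xs \<subseteq> V"
proof
  fix x assume "x \<in> set xs"
  then obtain k where k: "k < length xs" "x = xs!k" by (auto simp: in_set_conv_nth)
  show "x \<in> V"
  proof (cases k)
    case 0 then show ?thesis using k assms(1,2) by (simp add: upath_def hd_conv_nth)
  next
    case (Suc j)
    have j: "j < length fs" using k Suc assms(1) by (simp add: upath_def)
    then have "{src G (fs!j), tgt G (fs!j)} = {xs!j, xs!Suc j}" using assms(1) by (simp add: upath_def)
    moreover have "fs!j \<in> S" using j assms(1) by (auto simp: upath_def)
    ultimately show ?thesis using assms(3) k Suc by (metis insertCI insertE singletonD)
  qed
qed

lemma upath_rtrancl: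
  assumes "upath G S xs fs"
  shows "(hd xs, last xs) \<in> (adjS G S)\<^sup>*"
proof -
  have "\<forall>k<length xs. (hd xs, xs!k) \<in> (adjS G S)\<^sup>*"
  proof (intro allI impI)
    fix k assume "k < length xs"
    then show "(hd xs, xs!k) \<in> (adjS G S)\<^sup>*"
    proof (induction k)
      case 0 then show ?case using assms by (simp add: upath_def hd_conv_nth)
    next
      case (Suc k)
      have j: "k < length fs" using Suc.prems assms by (simp add: upath_def)
      then have "{src G (fs!k), tgt G (fs!k)} = {xs!k, xs!Suc k}" "fs!k \<in> S"
        using assms by (auto simp: upath_def)
      then have "(xs!k, xs!Suc k) \<in> adjS G S" by (auto simp: adjS_iff)
      with Suc show ?case by (meson Suc_lessD rtrancl_into_rtrancl)
    qed
  qed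
  then show ?thesis using assms by (simp add: upath_def last_conv_nth)
qed

lemma rtrancl_upath:
  assumes "(x,y) \<in> (adjS G S)\<^sup>*"
  shows "\<exists>xs fs. upath G S xs fs \<and> hd xs = x \<and> last xs = y"
  using assms
proof (induction rule: rtrancl_induct)
  case base
  then show ?case by (rule exI[of _ "[x]"], rule exI[of _ "[]"]) (simp add: upath_def)
next
  case (step y z)
  then obtain xs fs where p: "upath G S xs fs" "hd xs = x" "last xs = y" by blast
  from step(2) obtain e where e: "e \<in> S" "{src G e, tgt G e} = {y, z}" by (auto simp: adjS_iff)
  show ?case
  proof (cases "z \<in> set xs")
    case True
    then obtain k where k: "k < length xs" "xs!k = z" by (auto simp: in_set_conv_nth)
    have "upath G S (take (Suc k) xs) (take k fs)"
      using p(1) k unfolding upath_def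
      by (auto dest: in_set_takeD)
    moreover have "hd (take (Suc k) xs) = x" using p k by (simp add: upath_def)
    moreover have "last (take (Suc k) xs) = z" using k by (simp add: take_Suc_conv_app_nth)
    ultimately show ?thesis by blast
  next
    case False
    have nf: "e \<notin> set fs"
    proof
      assume "e \<in> set fs"
      then obtain j where j: "j < length fs" "fs!j = e" by (auto simp: in_set_conv_nth)
      have "{src G (fs!j), tgt G (fs!j)} = {xs!j, xs!Suc j}" using p(1) j(1) by (simp add: upath_def)
      then have "{src G e, tgt G e} = {xs!j, xs!Suc j}" using j(2) by simp
      then have "{y,z} = {xs!j, xs!Suc j}" using e by simp
      then have "z \<in> {xs!j, xs!Suc j}" by auto
      moreover have "Suc j < length xs" using j p by (simp add: upath_def)
      ultimately show False using False by auto
    qed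
    have L: "length xs = Suc (length fs)" using p by (simp add: upath_def)
    have ly: "xs ! length fs = y" using p L by (simp add: upath_def last_conv_nth)
    have "upath G S (xs @ [z]) (fs @ [e])"
      unfolding upath_def
    proof (intro conjI allI impI)
      fix j assume j: "j < length (fs @ [e])"
      show "{src G ((fs @ [e]) ! j), tgt G ((fs @ [e]) ! j)} = {(xs @ [z]) ! j, (xs @ [z]) ! Suc j}"
      proof (cases "j < length fs")
        case True
        then show ?thesis using p L by (simp add: upath_def nth_append)
      next
        case False
        then have "j = length fs" using j by simp
        then show ?thesis using e ly L by (simp add: nth_append)
      qed
    qed (use p False nf e in \<open>auto simp: upath_def\<close>)
    moreover have "hd (xs @ [z]) = x" using p by (simp add: upath_def)
    ultimately show ?thesis by fastforce
  qed
qed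

lemma upath_cons:
  assumes "upath G S xs fs" "b \<notin> set xs" "e \<in> S" "e \<notin> set fs" "{src G e, tgt G e} = {b, hd xs}"
  shows "upath G S (b # xs) (e # fs)"
  unfolding upath_def
proof (intro conjI allI impI)
  fix j assume j: "j < length (e # fs)"
  show "{src G ((e # fs) ! j), tgt G ((e # fs) ! j)} = {(b # xs) ! j, (b # xs) ! Suc j}"
  proof (cases j)
    case 0 then show ?thesis using assms by (simp add: upath_def hd_conv_nth)
  next
    case (Suc i) then show ?thesis using assms j by (simp add: upath_def)
  qed
qed (use assms in \<open>auto simp: upath_def\<close>)

lemma upath_cycle:
  assumes "upath G S xs fs" "S \<subseteq> edges G" "e \<in> edges G" "e \<notin> set fs"
    "{src G e, tgt G e} = {last xs, hd xs}"
  shows "ucycle G xs (fs @ [e])"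
  unfolding ucycle_def
proof (intro conjI allI impI)
  have L: "length xs = Suc (length fs)" using assms by (simp add: upath_def)
  fix i assume i: "i < length (fs @ [e])"
  show "{src G ((fs @ [e]) ! i), tgt G ((fs @ [e]) ! i)} = {xs ! i, xs ! ((i + 1) mod length (fs @ [e]))}"
  proof (cases "i < length fs")
    case True
    then show ?thesis using assms L by (simp add: upath_def nth_append)
  next
    case False
    then have "i = length fs" using i by simp
    then show ?thesis using assms L by (simp add: nth_append upath_def last_conv_nth hd_conv_nth)
  qed
qed (use assms in \<open>auto simp: upath_def\<close>)

lemma seg_conn:
  assumes "\<And>j. lo \<le> j \<Longrightarrow> j < hi \<Longrightarrow> (f j, f (Suc j)) \<in> R"
  shows "lo \<le> k \<Longrightarrow> k \<le> hi \<Longrightarrow> (f lo, f k) \<in> R\<^sup>*"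
proof (induction k)
  case 0 then show ?case by simp
next
  case (Suc k)
  show ?case
  proof (cases "lo = Suc k")
    case True then show ?thesis by simp
  next
    case False
    then have "lo \<le> k" using Suc by simp
    have "(f lo, f k) \<in> R\<^sup>*" using Suc.IH \<open>lo \<le> k\<close> Suc.prems(2) by simp
    moreover have "(f k, f (Suc k)) \<in> R" using assms \<open>lo \<le> k\<close> Suc.prems(2) by simp
    ultimately show ?thesis by (rule rtrancl_into_rtrancl)
  qed
qed

lemma tree_no_loop:
  assumes "is_tree t" "e \<in> edges t"
  shows "src t e \<noteq> tgt t e"
proof
  assume eq: "src t e = tgt t e"
  have "ucycle t [src t e] [e]" using assms eq by (simp add: ucycle_def)
  then have "set [e] \<in> simple_cycles t" unfolding simple_cycles_def by blast
  then show False using assms by (simp add: is_tree_def)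
qed

lemma ucycle_conn:
  assumes cyc: "ucycle G vs es" and a: "a \<in> set vs" "a \<noteq> B" and b: "b \<in> set vs" "b \<noteq> B"
  shows "(a, b) \<in> (adjS G {e \<in> set es. src G e \<noteq> B \<and> tgt G e \<noteq> B})\<^sup>*"
proof -
  define R where "R = adjS G {e \<in> set es. src G e \<noteq> B \<and> tgt G e \<noteq> B}"
  define n where "n = length vs"
  have n: "length es = n" "n > 0" using cyc by (auto simp: ucycle_def n_def)
  have dv: "distinct vs" using cyc by (simp add: ucycle_def)
  have stp: "(vs!j, vs!Suc j) \<in> R" if "Suc j < n" "vs!j \<noteq> B" "vs!Suc j \<noteq> B" for j
  proof -
    have "{src G (es!j), tgt G (es!j)} = {vs!j, vs!((j+1) mod n)}" "es!j \<in> set es"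
      using cyc that n by (auto simp: ucycle_def)
    moreover have "(j+1) mod n = Suc j" using that by simp
    ultimately show ?thesis using that unfolding R_def adjS_iff
      by (intro bexI[of _ "es!j"]) (auto simp: doubleton_eq_iff)
  qed
  have wrp: "(vs!(n-1), vs!0) \<in> R" if "vs!(n-1) \<noteq> B" "vs!0 \<noteq> B"
  proof -
    have "{src G (es!(n-1)), tgt G (es!(n-1))} = {vs!(n-1), vs!((n-1+1) mod n)}" "es!(n-1) \<in> set es"
      using cyc n by (auto simp: ucycle_def)
    moreover have "(n-1+1) mod n = 0" using n by simp
    ultimately show ?thesis using that unfolding R_def adjS_iff
      by (intro bexI[of _ "es!(n-1)"]) (auto simp: doubleton_eq_iff)
  qed
  have sym: "(y,x) \<in> R\<^sup>*" if "(x,y) \<in> R\<^sup>*" for x y using that conn_sym unfolding R_def by metis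
  have ne: "vs!j \<noteq> B" if "B = vs!i" "i < n" "j < n" "j \<noteq> i" for i j
    using that dv n_def nth_eq_iff_index_eq by metis
  have "\<exists>c. \<forall>p<n. vs!p \<noteq> B \<longrightarrow> (c, vs!p) \<in> R\<^sup>*"
  proof (cases "B \<in> set vs")
    case False
    have "(vs!0, vs!p) \<in> R\<^sup>*" if "p < n" for p
    proof (rule seg_conn[where hi = "n-1"])
      fix j assume "0 \<le> j" "j < n - 1"
      then have "vs!j \<in> set vs" "vs!Suc j \<in> set vs" "Suc j < n" using n_def by auto
      then show "(vs ! j, vs ! Suc j) \<in> R" using stp False by metis
    qed (use that in auto)
    then show ?thesis by blast
  next
    case True
    then obtain i where i: "i < n" "B = vs!i" by (auto simp: in_set_conv_nth n_def)
    show ?thesis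
    proof (cases "i = n - 1")
      case True
      have "(vs!0, vs!p) \<in> R\<^sup>*" if "p < n" "vs!p \<noteq> B" for p
      proof (rule seg_conn[where hi = "n-2"])
        fix j assume "0 \<le> j" "j < n - 2"
        then show "(vs ! j, vs ! Suc j) \<in> R" using stp ne[OF i(2) i(1)] True by auto
      next
        show "p \<le> n - 2" using that True i by (cases "p = n - 1") auto
      qed simp
      then show ?thesis by blast
    next
      case False
      have s1: "(vs!Suc i, vs!p) \<in> R\<^sup>*" if "Suc i \<le> p" "p < n" for p
      proof (rule seg_conn[where hi = "n-1"])
        fix j assume "Suc i \<le> j" "j < n - 1"
        then show "(vs ! j, vs ! Suc j) \<in> R" using stp ne[OF i(2) i(1)] by auto
      qed (use that in auto)
      have s2: "(vs!0, vs!p) \<in> R\<^sup>*" if "p < i" for p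
      proof (rule seg_conn[where hi = "i-1"])
        fix j assume "0 \<le> j" "j < i - 1"
        then show "(vs ! j, vs ! Suc j) \<in> R" using stp ne[OF i(2) i(1)] i by auto
      qed (use that in auto)
      have "(vs!(n-1), vs!p) \<in> R\<^sup>*" if "p < n" "vs!p \<noteq> B" for p
      proof -
        have pi: "p \<noteq> i" using that i by auto
        show ?thesis
        proof (cases "p < i")
          case True
          have "(vs!(n-1), vs!0) \<in> R" using wrp ne[OF i(2) i(1)] False True i by auto
          then show ?thesis using s2[OF True] by (meson converse_rtrancl_into_rtrancl)
        next
          case False2: False
          have "(vs!Suc i, vs!(n-1)) \<in> R\<^sup>*" using s1[of "n-1"] i False by auto
          then have "(vs!(n-1), vs!Suc i) \<in> R\<^sup>*" by (rule sym)
          moreover have "Suc i \<le> p" using False2 pi by simp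
          ultimately show ?thesis using s1[of p] that(1) by (meson rtrancl_trans)
        qed
      qed
      then show ?thesis by blast
    qed
  qed
  then obtain c where c: "\<And>p. p < n \<Longrightarrow> vs!p \<noteq> B \<Longrightarrow> (c, vs!p) \<in> R\<^sup>*" by blast
  obtain p q where "p < n" "q < n" "a = vs!p" "b = vs!q" using a b by (auto simp: in_set_conv_nth n_def)
  then have "(c, a) \<in> R\<^sup>*" "(c, b) \<in> R\<^sup>*" using c a b by auto
  then show ?thesis unfolding R_def[symmetric] using sym rtrancl_trans by metis
qed

lemma pullback_cycle:
  assumes cyc: "ucycle G vs es" and sub: "set es \<subseteq> i ` edges H"
    and inja: "inj_on a (verts H)" and inji: "inj_on i (edges H)"
    and gmH: "src H ` edges H \<subseteq> verts H" "tgt H ` edges H \<subseteq> verts H"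
    and s: "\<And>e. e \<in> edges H \<Longrightarrow> src G (i e) = a (src H e)"
    and t: "\<And>e. e \<in> edges H \<Longrightarrow> tgt G (i e) = a (tgt H e)"
  shows "ucycle H (map (inv_into (verts H) a) vs) (map (inv_into (edges H) i) es)"
proof -
  define n where "n = length es"
  have L: "length vs = n" using cyc by (simp add: ucycle_def n_def)
  have E: "{src G (es!k), tgt G (es!k)} = {vs!k, vs!((k+1) mod n)}" if "k < n" for k
    using cyc that by (simp add: ucycle_def n_def)
  have ek: "es!k \<in> i ` edges H" if "k < n" for k using sub that n_def by auto
  have vA: "vs!k \<in> a ` verts H" if kk: "k < n" for k
  proof -
    obtain e where e: "e \<in> edges H" "es!k = i e" using ek[OF kk] by auto
    have "vs!k \<in> {src G (es!k), tgt G (es!k)}" using E[OF kk] by auto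
    then show ?thesis using e s t gmH by auto
  qed
  have vsA: "set vs \<subseteq> a ` verts H" using vA L by (auto simp: in_set_conv_nth)
  have injA: "inj_on (inv_into (verts H) a) (a ` verts H)" by (rule inj_on_inv_into) simp
  have injI: "inj_on (inv_into (edges H) i) (i ` edges H)" by (rule inj_on_inv_into) simp
  show ?thesis unfolding ucycle_def
  proof (intro conjI allI impI)
    show "map (inv_into (edges H) i) es \<noteq> []" using cyc by (simp add: ucycle_def)
    show "length (map (inv_into (verts H) a) vs) = length (map (inv_into (edges H) i) es)" using L n_def by simp
    show "distinct (map (inv_into (verts H) a) vs)" using cyc vsA injA
      by (simp add: ucycle_def distinct_map inj_on_subset)
    show "distinct (map (inv_into (edges H) i) es)" using cyc sub injI
      by (simp add: ucycle_def distinct_map inj_on_subset)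
    show "set (map (inv_into (edges H) i) es) \<subseteq> edges H" using sub
      by (auto simp: inv_into_f_f[OF inji])
    fix k assume k: "k < length (map (inv_into (edges H) i) es)"
    then have k': "k < n" by (simp add: n_def)
    obtain e where e: "e \<in> edges H" "es!k = i e" using ek[OF k'] by auto
    have ie: "inv_into (edges H) i (es!k) = e" using e inji by simp
    have k1: "(k+1) mod n < n" using k' by simp
    have "a ` {src H e, tgt H e} = {vs!k, vs!((k+1) mod n)}" using E[OF k'] e s t by simp
    then have "inv_into (verts H) a ` a ` {src H e, tgt H e} = inv_into (verts H) a ` {vs!k, vs!((k+1) mod n)}"
      by simp
    moreover have "inv_into (verts H) a ` a ` {src H e, tgt H e} = {src H e, tgt H e}"
      using e gmH inja by (simp add: inv_into_f_f image_subset_iff)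
    ultimately show "{src H (map (inv_into (edges H) i) es ! k), tgt H (map (inv_into (edges H) i) es ! k)} =
         {map (inv_into (verts H) a) vs ! k, map (inv_into (verts H) a) vs ! ((k + 1) mod length (map (inv_into (edges H) i) es))}"
      using k k' k1 L ie by (simp add: n_def)
  qed
qed

lemma modarith: "j < (n::nat) \<Longrightarrow> k < n \<Longrightarrow> ((k+1) mod n = j) \<longleftrightarrow> (k = (j + n - 1) mod n)"
  by (cases "k+1 = n"; cases j) (auto simp: mod_if)

lemma ucycle_endpoints:
  assumes "ucycle G vs es" "e \<in> set es"
  shows "src G e \<in> set vs \<and> tgt G e \<in> set vs"
proof -
  obtain k where k: "k < length es" "es!k = e" using assms by (auto simp: in_set_conv_nth)
  have L: "length vs = length es" using assms by (simp add: ucycle_def)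
  have "{src G e, tgt G e} = {vs!k, vs!((k+1) mod length es)}" using assms k by (auto simp: ucycle_def)
  moreover have "length es > 0" using k by auto
  then have "(k+1) mod length es < length es" by simp
  then have "vs!k \<in> set vs" "vs!((k+1) mod length es) \<in> set vs" using k L by (metis nth_mem)+
  ultimately have "{src G e, tgt G e} \<subseteq> set vs" by simp
  then show ?thesis by simp
qed

lemma dcycle_ucycle: "dcycle G vs es \<Longrightarrow> ucycle G vs es"
  unfolding dcycle_def ucycle_def by auto

lemma cactus_ex:
  assumes "oriented_cactus G" "e \<in> edges G"
  shows "\<exists>C. C \<in> simple_cycles G \<and> e \<in> C \<and> (\<forall>D\<in>simple_cycles G. e \<in> D \<longrightarrow> D = C)"
  using assms unfolding oriented_cactus_def is_cactus_def by (metis (no_types, lifting))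

lemma simple_cycle_dcycle:
  assumes "oriented_cactus G" "C \<in> simple_cycles G"
  shows "\<exists>vs es. dcycle G vs es \<and> set es = C"
  using assms unfolding oriented_cactus_def by blast

lemma ucycle_sc: "ucycle G vs es \<Longrightarrow> set es \<in> simple_cycles G"
  unfolding simple_cycles_def by blast

locale emb2 =
  fixes G :: "('x,'y,'b) gm" and t :: "('v,'e,'c) gm" and t' :: "('w,'f,'d) gm"
    and al :: "'v \<Rightarrow> 'x" and be :: "'w \<Rightarrow> 'x" and i1 :: "'e \<Rightarrow> 'y" and i2 :: "'f \<Rightarrow> 'y"
  assumes cact: "oriented_cactus G"
    and gm1: "graph_monomial t" and tr1: "is_tree t"
    and gm2: "graph_monomial t'" and tr2: "is_tree t'"
    and inj_al: "inj_on al (verts t)" and inj_be: "inj_on be (verts t')"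
    and inj_i1: "inj_on i1 (edges t)" and inj_i2: "inj_on i2 (edges t')"
    and edgesG: "edges G = i1 ` edges t \<union> i2 ` edges t'"
    and disj: "i1 ` edges t \<inter> i2 ` edges t' = {}"
    and src1: "\<And>e. e \<in> edges t \<Longrightarrow> src G (i1 e) = al (src t e)"
    and tgt1: "\<And>e. e \<in> edges t \<Longrightarrow> tgt G (i1 e) = al (tgt t e)"
    and src2: "\<And>e. e \<in> edges t' \<Longrightarrow> src G (i2 e) = be (src t' e)"
    and tgt2: "\<And>e. e \<in> edges t' \<Longrightarrow> tgt G (i2 e) = be (tgt t' e)"
begin

lemma srcV1: "e \<in> edges t \<Longrightarrow> src t e \<in> verts t" and tgtV1: "e \<in> edges t \<Longrightarrow> tgt t e \<in> verts t"
  and srcV2: "f \<in> edges t' \<Longrightarrow> src t' f \<in> verts t'" and tgtV2: "f \<in> edges t' \<Longrightarrow> tgt t' f \<in> verts t'"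
  using gm1 gm2 unfolding graph_monomial_def by auto

lemma no_pure:
  assumes "ucycle G vs es"
  shows "\<exists>f\<in>edges t'. i2 f \<in> set es"
proof (rule ccontr)
  assume "\<not> ?thesis"
  moreover have "set es \<subseteq> edges G" using assms by (simp add: ucycle_def)
  ultimately have sub: "set es \<subseteq> i1 ` edges t" using edgesG by blast
  have "ucycle t (map (inv_into (verts t) al) vs) (map (inv_into (edges t) i1) es)"
    by (rule pullback_cycle[OF assms sub inj_al inj_i1]) (use gm1 src1 tgt1 in \<open>auto simp: graph_monomial_def\<close>)
  then have "set (map (inv_into (edges t) i1) es) \<in> simple_cycles t" by (rule ucycle_sc)
  then show False using tr1 by (simp add: is_tree_def)
qed

lemma be_conn:
  assumes S: "i2 ` edges t' \<subseteq> S" and y: "y \<in> verts t'" "y' \<in> verts t'"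
  shows "(be y, be y') \<in> (adjS G S)\<^sup>*"
proof -
  have "(y, y') \<in> (uadj t' \<union> (uadj t')\<inverse>)\<^sup>*" using gm2 y by (auto simp: graph_monomial_def connected_gm_def)
  then show ?thesis
  proof (induction rule: rtrancl_induct)
    case base then show ?case by simp
  next
    case (step a b)
    then obtain f where f: "f \<in> edges t'" "(a = src t' f \<and> b = tgt t' f) \<or> (b = src t' f \<and> a = tgt t' f)"
      by (auto simp: uadj_def)
    then have "(be a, be b) \<in> adjS G S" using S src2 tgt2 unfolding adjS_def by blast
    with step show ?case by (meson rtrancl_into_rtrancl)
  qed
qed

lemma t'_path:
  assumes y: "y \<in> verts t'" "y' \<in> verts t'"
  shows "\<exists>xs fs. upath t' (edges t') xs fs \<and> hd xs = y \<and> last xs = y'"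
proof -
  have "(y, y') \<in> (uadj t' \<union> (uadj t')\<inverse>)\<^sup>*" using gm2 y by (auto simp: graph_monomial_def connected_gm_def)
  moreover have "uadj t' \<union> (uadj t')\<inverse> \<subseteq> adjS t' (edges t')" by (auto simp: uadj_def adjS_def)
  ultimately have "(y, y') \<in> (adjS t' (edges t'))\<^sup>*" using rtrancl_mono by blast
  then show ?thesis by (rule rtrancl_upath)
qed

lemma map_path:
  assumes p: "upath t' (edges t') xs fs" and h: "hd xs \<in> verts t'"
  shows "upath G (i2 ` edges t') (map be xs) (map i2 fs)"
proof -
  have V: "set xs \<subseteq> verts t'" by (rule upath_verts[OF p h]) (auto simp: srcV2 tgtV2)
  have F: "set fs \<subseteq> edges t'" using p by (simp add: upath_def)
  show ?thesis unfolding upath_def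
  proof (intro conjI allI impI)
    show "distinct (map be xs)" using p V inj_be by (simp add: upath_def distinct_map inj_on_subset)
    show "distinct (map i2 fs)" using p F inj_i2 by (simp add: upath_def distinct_map inj_on_subset)
    fix j assume j: "j < length (map i2 fs)"
    then have j': "j < length fs" by simp
    then have fj: "fs!j \<in> edges t'" using F by auto
    have "{src t' (fs!j), tgt t' (fs!j)} = {xs!j, xs!Suc j}" using p j' by (simp add: upath_def)
    then have "be ` {src t' (fs!j), tgt t' (fs!j)} = be ` {xs!j, xs!Suc j}" by simp
    moreover have "Suc j < length xs" using p j' by (simp add: upath_def)
    ultimately show "{src G (map i2 fs ! j), tgt G (map i2 fs ! j)} = {map be xs ! j, map be xs ! Suc j}"
      using j' fj src2 tgt2 by simp
  qed (use p F in \<open>auto simp: upath_def\<close>)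
qed

lemma partA:
  assumes w: "w \<in> verts t" "al w \<notin> be ` verts t'" and e0: "e0 \<in> edges t" "src t e0 = w \<or> tgt t e0 = w"
  shows "indeg t w = 1 \<and> outdeg t w = 1"
proof -
  define B where "B = al w"
  define EB where "EB = {e \<in> edges G. src G e = B \<or> tgt G e = B}"
  define SB where "SB = {e \<in> edges G. src G e \<noteq> B \<and> tgt G e \<noteq> B}"
  have alinj: "al u = B \<longleftrightarrow> u = w" if "u \<in> verts t" for u
    using inj_al w that unfolding B_def by (auto simp: inj_on_eq_iff)
  have i2SB: "i2 ` edges t' \<subseteq> SB"
  proof
    fix x assume "x \<in> i2 ` edges t'"
    then obtain f where f: "f \<in> edges t'" "x = i2 f" by auto
    have "be (src t' f) \<noteq> B" "be (tgt t' f) \<noteq> B" using w f srcV2 tgtV2 unfolding B_def by force+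
    then show "x \<in> SB" using f src2 tgt2 edgesG unfolding SB_def by auto
  qed
  have SBE: "SB \<subseteq> edges G" unfolding SB_def by auto
  have EBi1: "\<exists>e1\<in>edges t. e = i1 e1 \<and> (src t e1 = w \<or> tgt t e1 = w)" if "e \<in> EB" for e
  proof -
    have "e \<in> edges G" "e \<notin> SB" using that unfolding EB_def SB_def by auto
    then obtain e1 where "e1 \<in> edges t" "e = i1 e1" using edgesG i2SB by blast
    then show ?thesis using that src1 tgt1 alinj srcV1 tgtV1 unfolding EB_def by auto
  qed
  have other: "\<exists>x. x \<noteq> B \<and> {src G e, tgt G e} = {B, x}" if eEB: "e \<in> EB" for e
  proof -
    obtain e1 where e1: "e1 \<in> edges t" "e = i1 e1" "src t e1 = w \<or> tgt t e1 = w" using EBi1[OF eEB] by blast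
    have "src t e1 \<noteq> tgt t e1" using tree_no_loop[OF tr1 e1(1)] .
    have s: "src G e = al (src t e1)" and tg: "tgt G e = al (tgt t e1)" using e1 src1 tgt1 by auto
    show ?thesis
    proof (cases "src t e1 = w")
      case True
      then have "tgt t e1 \<noteq> w" using \<open>src t e1 \<noteq> tgt t e1\<close> by simp
      then have "tgt G e \<noteq> B" using tg alinj tgtV1 e1(1) by simp
      moreover have "src G e = B" using s True B_def by simp
      ultimately show ?thesis by blast
    next
      case False
      then have "tgt t e1 = w" using e1(3) by simp
      then have "tgt G e = B" using tg B_def by simp
      moreover have "src G e \<noteq> B" using s alinj srcV1 e1(1) False by simp
      ultimately show ?thesis by (metis insert_commute)
    qed
  qed
  have nSB: "e \<notin> SB" if "e \<in> EB" for e using that unfolding EB_def SB_def by auto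
  have conn_beta: "\<exists>y\<in>verts t'. (x, be y) \<in> (adjS G SB)\<^sup>*"
    if "e \<in> EB" "{src G e, tgt G e} = {B, x}" "x \<noteq> B" for e x
  proof -
    have eG: "e \<in> edges G" using that unfolding EB_def by auto
    obtain C where C: "C \<in> simple_cycles G" "e \<in> C" using cactus_ex[OF cact eG] by blast
    then obtain vs es where c: "ucycle G vs es" "set es = C" unfolding simple_cycles_def by blast
    obtain f where f: "f \<in> edges t'" "i2 f \<in> set es" using no_pure[OF c(1)] by blast
    have "e \<in> set es" using C c by simp
    then have "{src G e, tgt G e} \<subseteq> set vs" using ucycle_endpoints[OF c(1)] by simp
    then have "x \<in> set vs" using that(2) by simp
    moreover have bv: "be (src t' f) \<in> set vs" using ucycle_endpoints[OF c(1) f(2)] src2 f by simp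
    moreover have "be (src t' f) \<noteq> B" using w f srcV2 unfolding B_def by force
    ultimately have "(x, be (src t' f)) \<in> (adjS G {e \<in> set es. src G e \<noteq> B \<and> tgt G e \<noteq> B})\<^sup>*"
      using ucycle_conn[OF c(1)] that(3) by blast
    moreover have "{e \<in> set es. src G e \<noteq> B \<and> tgt G e \<noteq> B} \<subseteq> SB"
      using c(1) unfolding SB_def ucycle_def by auto
    ultimately show ?thesis using adjS_mono srcV2[OF f(1)] by blast
  qed
  define a where "a = i1 e0"
  have aG: "a \<in> edges G" using e0(1) edgesG unfolding a_def by blast
  have "src G a = al (src t e0)" "tgt G a = al (tgt t e0)" using src1[OF e0(1)] tgt1[OF e0(1)] unfolding a_def by simp_all
  then have "src G a = B \<or> tgt G a = B" using e0(2) unfolding B_def by auto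
  then have aEB: "a \<in> EB" using aG unfolding EB_def by blast
  obtain C0 where C0: "C0 \<in> simple_cycles G" "a \<in> C0" and uniq: "\<And>D. D \<in> simple_cycles G \<Longrightarrow> a \<in> D \<Longrightarrow> D = C0"
    using cactus_ex[OF cact aG] by blast
  have EBC0: "EB \<subseteq> C0"
  proof
    fix e2 assume e2: "e2 \<in> EB"
    show "e2 \<in> C0"
    proof (cases "e2 = a")
      case True then show ?thesis using C0 by simp
    next
      case False
      obtain x1 where x1: "x1 \<noteq> B" "{src G a, tgt G a} = {B, x1}" using other[OF aEB] by blast
      obtain x2 where x2: "x2 \<noteq> B" "{src G e2, tgt G e2} = {B, x2}" using other[OF e2] by blast
      obtain y1 where y1: "y1 \<in> verts t'" "(x1, be y1) \<in> (adjS G SB)\<^sup>*" using conn_beta[OF aEB x1(2) x1(1)] by blast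
      obtain y2 where y2: "y2 \<in> verts t'" "(x2, be y2) \<in> (adjS G SB)\<^sup>*" using conn_beta[OF e2 x2(2) x2(1)] by blast
      have "(be y1, be y2) \<in> (adjS G SB)\<^sup>*" using be_conn[OF i2SB y1(1) y2(1)] .
      moreover have "(be y2, x2) \<in> (adjS G SB)\<^sup>*" using conn_sym[OF y2(2)] .
      ultimately have x12: "(x1, x2) \<in> (adjS G SB)\<^sup>*" using y1(2) by (meson rtrancl_trans)
      obtain xs fs where p: "upath G SB xs fs" "hd xs = x1" "last xs = x2"
        using rtrancl_upath[OF x12] by blast
      have Bn: "B \<notin> set xs"
      proof -
        have "set xs \<subseteq> {v. v \<noteq> B}"
        proof (rule upath_verts[OF p(1)])
          show "hd xs \<in> {v. v \<noteq> B}" using p(2) x1(1) by simp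
          show "\<forall>e\<in>SB. src G e \<in> {v. v \<noteq> B} \<and> tgt G e \<in> {v. v \<noteq> B}" unfolding SB_def by blast
        qed
        then show ?thesis by auto
      qed
      have fsSB: "set fs \<subseteq> SB" using p by (simp add: upath_def)
      have p2: "upath G (edges G) (B # xs) (a # fs)"
      proof (rule upath_cons[OF upath_mono[OF p(1) SBE] Bn aG])
        show "a \<notin> set fs" using fsSB nSB[OF aEB] by blast
        show "{src G a, tgt G a} = {B, hd xs}" using x1(2) p(2) by simp
      qed
      have xsne: "xs \<noteq> []" using p by (simp add: upath_def)
      have e2G: "e2 \<in> edges G" using e2 unfolding EB_def by auto
      have "ucycle G (B # xs) ((a # fs) @ [e2])"
      proof (rule upath_cycle[OF p2 order_refl e2G])
        show "e2 \<notin> set (a # fs)" using False fsSB nSB[OF e2] by auto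
        have "last (B # xs) = x2" using p(3) xsne by simp
        then show "{src G e2, tgt G e2} = {last (B # xs), hd (B # xs)}" using x2(2) by (simp add: insert_commute)
      qed
      then have "set ((a # fs) @ [e2]) \<in> simple_cycles G" by (rule ucycle_sc)
      moreover have "a \<in> set ((a # fs) @ [e2])" by simp
      ultimately have "set ((a # fs) @ [e2]) = C0" by (rule uniq)
      then show ?thesis by auto
    qed
  qed
  obtain vs es where dc: "dcycle G vs es" "set es = C0" using simple_cycle_dcycle[OF cact C0(1)] by blast
  define n where "n = length es"
  have L: "length vs = n" using dc by (simp add: dcycle_def n_def)
  have dv: "distinct vs" using dc by (simp add: dcycle_def)
  have ST: "src G (es!k) = vs!k \<and> tgt G (es!k) = vs!((k+1) mod n)" if "k < n" for k
    using dc that by (simp add: dcycle_def n_def)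
  have esG: "set es \<subseteq> edges G" using dc by (simp add: dcycle_def)
  have "B \<in> set vs" using aEB ucycle_endpoints[OF dcycle_ucycle[OF dc(1)]] dc(2) C0(2) unfolding EB_def by auto
  then obtain j where j: "j < n" "vs!j = B" using L by (auto simp: in_set_conv_nth)
  have n0: "n > 0" using j by simp
  define k' where "k' = (j + n - 1) mod n"
  have k': "k' < n" using n0 unfolding k'_def by simp
  have Xin: "{e \<in> edges G. tgt G e = B} = {es!k'}"
  proof (intro equalityI subsetI)
    fix e assume e: "e \<in> {e \<in> edges G. tgt G e = B}"
    then have "e \<in> set es" using EBC0 dc(2) unfolding EB_def by auto
    then obtain k where k: "k < n" "es!k = e" by (auto simp: in_set_conv_nth n_def)
    have "vs!((k+1) mod n) = vs!j" using ST[OF k(1)] k e j by auto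
    moreover have "(k+1) mod n < n" using n0 by simp
    ultimately have "(k+1) mod n = j" using dv L j nth_eq_iff_index_eq by metis
    then have "k = k'" using modarith[OF j(1) k(1)] unfolding k'_def by simp
    then show "e \<in> {es!k'}" using k by simp
  next
    fix e assume "e \<in> {es!k'}"
    then have e: "e = es!k'" by simp
    have "(k'+1) mod n = j" using modarith[OF j(1) k'] unfolding k'_def by simp
    then show "e \<in> {e \<in> edges G. tgt G e = B}" using e ST[OF k'] j esG k' n_def by auto
  qed
  have Xout: "{e \<in> edges G. src G e = B} = {es!j}"
  proof (intro equalityI subsetI)
    fix e assume e: "e \<in> {e \<in> edges G. src G e = B}"
    then have "e \<in> set es" using EBC0 dc(2) unfolding EB_def by auto
    then obtain k where k: "k < n" "es!k = e" by (auto simp: in_set_conv_nth n_def)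
    have "vs!k = vs!j" using ST[OF k(1)] k e j by auto
    then have "k = j" using dv L j k nth_eq_iff_index_eq by metis
    then show "e \<in> {es!j}" using k by simp
  next
    fix e assume "e \<in> {es!j}"
    then show "e \<in> {e \<in> edges G. src G e = B}" using ST[OF j(1)] j esG n_def by auto
  qed
  have Iin: "i1 ` {e \<in> edges t. tgt t e = w} = {e \<in> edges G. tgt G e = B}"
  proof (intro equalityI subsetI)
    fix x assume "x \<in> i1 ` {e \<in> edges t. tgt t e = w}"
    then show "x \<in> {e \<in> edges G. tgt G e = B}" using tgt1 edgesG unfolding B_def by auto
  next
    fix x assume x: "x \<in> {e \<in> edges G. tgt G e = B}"
    then have "x \<in> EB" unfolding EB_def by auto
    then obtain e1 where e1: "e1 \<in> edges t" "x = i1 e1" using EBi1 by blast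
    then have "tgt t e1 = w" using x tgt1 alinj tgtV1 by auto
    then show "x \<in> i1 ` {e \<in> edges t. tgt t e = w}" using e1 by auto
  qed
  have Iout: "i1 ` {e \<in> edges t. src t e = w} = {e \<in> edges G. src G e = B}"
  proof (intro equalityI subsetI)
    fix x assume "x \<in> i1 ` {e \<in> edges t. src t e = w}"
    then show "x \<in> {e \<in> edges G. src G e = B}" using src1 edgesG unfolding B_def by auto
  next
    fix x assume x: "x \<in> {e \<in> edges G. src G e = B}"
    then have "x \<in> EB" unfolding EB_def by auto
    then obtain e1 where e1: "e1 \<in> edges t" "x = i1 e1" using EBi1 by blast
    then have "src t e1 = w" using x src1 alinj srcV1 by auto
    then show "x \<in> i1 ` {e \<in> edges t. src t e = w}" using e1 by auto
  qed
  have "indeg t w = card (i1 ` {e \<in> edges t. tgt t e = w})" unfolding indeg_def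
    by (rule card_image[symmetric]) (rule inj_on_subset[OF inj_i1], auto)
  moreover have "outdeg t w = card (i1 ` {e \<in> edges t. src t e = w})" unfolding outdeg_def
    by (rule card_image[symmetric]) (rule inj_on_subset[OF inj_i1], auto)
  ultimately show ?thesis using Iin Iout Xin Xout by simp
qed

lemma partB_a:
  assumes match: "al ` verts t \<subseteq> be ` verts t'" and e: "e \<in> edges t"
    and C: "C \<in> simple_cycles G" "i1 e \<in> C"
  shows "\<exists>P. P \<noteq> {} \<and> P \<subseteq> edges t' \<and> C = insert (i1 e) (i2 ` P)"
proof -
  define v where "v = src t e"
  define w where "w = tgt t e"
  have vw: "v \<in> verts t" "w \<in> verts t" "v \<noteq> w" using srcV1 tgtV1 e tree_no_loop[OF tr1 e] v_def w_def by auto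
  obtain v' where v': "v' \<in> verts t'" "al v = be v'" using match vw by blast
  obtain w' where w': "w' \<in> verts t'" "al w = be w'" using match vw by blast
  have "v' \<noteq> w'" using v' w' vw inj_al by (metis inj_on_eq_iff)
  obtain xs fs where p: "upath t' (edges t') xs fs" "hd xs = w'" "last xs = v'" using t'_path[OF w'(1) v'(1)] by blast
  have xsne: "xs \<noteq> []" using p by (simp add: upath_def)
  have F: "set fs \<subseteq> edges t'" using p by (simp add: upath_def)
  have mp: "upath G (i2 ` edges t') (map be xs) (map i2 fs)" using map_path[OF p(1)] p(2) w' by simp
  have eG: "i1 e \<in> edges G" using e edgesG by auto
  have "ucycle G (map be xs) (map i2 fs @ [i1 e])"
  proof (rule upath_cycle[OF mp _ eG])
    show "i2 ` edges t' \<subseteq> edges G" using edgesG by auto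
    show "i1 e \<notin> set (map i2 fs)" using disj e F by auto
    show "{src G (i1 e), tgt G (i1 e)} = {last (map be xs), hd (map be xs)}"
      using src1[OF e] tgt1[OF e] v' w' p xsne v_def w_def by (simp add: last_map hd_map)
  qed
  then have D: "set (map i2 fs @ [i1 e]) \<in> simple_cycles G" by (rule ucycle_sc)
  obtain C0 where "C0 \<in> simple_cycles G" "i1 e \<in> C0" and u: "\<And>D. D \<in> simple_cycles G \<Longrightarrow> i1 e \<in> D \<Longrightarrow> D = C0"
    using cactus_ex[OF cact eG] by blast
  have "C = set (map i2 fs @ [i1 e])" using u[OF C] u[OF D] by simp
  moreover have "fs \<noteq> []"
  proof
    assume "fs = []"
    then have "length xs = 1" using p by (simp add: upath_def)
    then have "hd xs = last xs" by (cases xs) auto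
    then show False using p \<open>v' \<noteq> w'\<close> by simp
  qed
  ultimately show ?thesis using F by (intro exI[of _ "set fs"]) auto
qed

end

lemma emb2_swap: "emb2 G t t' al be i1 i2 \<Longrightarrow> emb2 G t' t be al i2 i1"
  unfolding emb2_def by auto

lemma emb2_partB:
  assumes E: "emb2 G t t' al be i1 i2" and match: "al ` verts t = be ` verts t'" and e: "e \<in> edges t"
  shows "\<exists>e'\<in>edges t'. be (src t' e') = al (tgt t e) \<and> be (tgt t' e') = al (src t e)"
proof -
  interpret A: emb2 G t t' al be i1 i2 by (rule E)
  interpret S: emb2 G t' t be al i2 i1 by (rule emb2_swap[OF E])
  have eG: "i1 e \<in> edges G" using e A.edgesG by auto
  obtain C where C: "C \<in> simple_cycles G" "i1 e \<in> C" using cactus_ex[OF A.cact eG] by blast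
  obtain P where P: "P \<noteq> {}" "P \<subseteq> edges t'" "C = insert (i1 e) (i2 ` P)"
    using A.partB_a[OF _ e C] match by auto
  obtain e' where e': "e' \<in> P" using P by auto
  have e'E: "e' \<in> edges t'" using e' P by auto
  have "i2 e' \<in> C" using P e' by auto
  then obtain Q where Q: "Q \<noteq> {}" "Q \<subseteq> edges t" "C = insert (i2 e') (i1 ` Q)"
    using S.partB_a[OF _ e'E C(1)] match by auto
  have "P = {e'}"
  proof (intro equalityI subsetI)
    fix p assume p: "p \<in> P"
    then have "i2 p \<in> C" using P by auto
    moreover have "i2 p \<notin> i1 ` Q"
    proof
      assume "i2 p \<in> i1 ` Q"
      then have "i2 p \<in> i1 ` edges t" using Q by blast
      moreover have "i2 p \<in> i2 ` edges t'" using p P by blast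
      ultimately show False using A.disj by blast
    qed
    ultimately have "i2 p = i2 e'" using Q by auto
    then show "p \<in> {e'}" using A.inj_i2 p P e'E by (auto simp: inj_on_eq_iff)
  qed (use e' in auto)
  then have CC: "C = {i1 e, i2 e'}" using P by auto
  have ne: "i1 e \<noteq> i2 e'" using A.disj e e'E by auto
  obtain vs es where dc: "dcycle G vs es" "set es = C" using simple_cycle_dcycle[OF A.cact C(1)] by blast
  have "length es = 2" using dc CC ne distinct_card[of es] by (simp add: dcycle_def)
  then obtain x0 x1 where es: "es = [x0, x1]"
    by (metis One_nat_def Suc_1 length_0_conv length_Suc_conv)
  have "length vs = 2" using dc es by (simp add: dcycle_def)
  have d0: "src G x0 = vs!0" "tgt G x0 = vs!1" using dc es by (auto simp: dcycle_def)
  have d1: "src G x1 = vs!1" "tgt G x1 = vs!0" using dc es spec[of _ 1] by (auto simp: dcycle_def)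
  have "{x0, x1} = {i1 e, i2 e'}" using dc es CC by simp
  then have "src G (i2 e') = tgt G (i1 e) \<and> tgt G (i2 e') = src G (i1 e)"
    using d0 d1 ne by (auto simp: doubleton_eq_iff)
  then show ?thesis using e'E A.src1[OF e] A.tgt1[OF e] A.src2[OF e'E] A.tgt2[OF e'E] by auto
qed

lemma blk_glue:
  assumes "x \<in> A" "a \<in> A" "b \<in> A"
  shows "blk (glue_part A a b) x = (if x = a \<or> x = b then {a, b} else {x})"
  unfolding blk_def
proof (rule the_equality)
  show "(if x = a \<or> x = b then {a, b} else {x}) \<in> glue_part A a b \<and> x \<in> (if x = a \<or> x = b then {a, b} else {x})"
    using assms by (auto simp: glue_part_def)
next
  fix Y assume "Y \<in> glue_part A a b \<and> x \<in> Y"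
  then show "Y = (if x = a \<or> x = b then {a, b} else {x})" by (auto simp: glue_part_def)
qed

lemma blk_glue_in:
  assumes "x \<in> A" "a \<in> A" "b \<in> A"
  shows "blk (glue_part A a b) x \<in> glue_part A a b"
  using blk_glue[OF assms] assms by (auto simp: glue_part_def)

lemma glue_blk_surj:
  assumes "Y \<in> glue_part A a b" "a \<in> A" "b \<in> A"
  shows "\<exists>z\<in>A. Y = blk (glue_part A a b) z"
proof -
  from assms(1) have "Y = {a, b} \<or> (\<exists>z\<in>A - {a, b}. Y = {z})" by (auto simp: glue_part_def)
  then show ?thesis
  proof
    assume "Y = {a, b}" then show ?thesis using blk_glue[OF assms(2) assms(2) assms(3)] assms by auto
  next
    assume "\<exists>z\<in>A - {a, b}. Y = {z}"
    then obtain z where "z \<in> A" "z \<noteq> a" "z \<noteq> b" "Y = {z}" by auto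
    then show ?thesis using blk_glue[OF \<open>z \<in> A\<close> assms(2,3)] by auto
  qed
qed

lemma pblk:
  assumes "partition_on A P" "x \<in> A"
  shows "blk P x \<in> P \<and> x \<in> blk P x"
proof -
  obtain Y where Y: "Y \<in> P" "x \<in> Y" using assms unfolding partition_on_def by auto
  have "blk P x = Y" unfolding blk_def
  proof (rule the_equality)
    show "Y \<in> P \<and> x \<in> Y" using Y by simp
    fix Z assume "Z \<in> P \<and> x \<in> Z"
    then show "Z = Y" using Y assms(1) unfolding partition_on_def disjoint_def by blast
  qed
  then show ?thesis using Y by simp
qed

lemma pblk_eq:
  assumes "partition_on A P" "Y \<in> P" "x \<in> Y"
  shows "blk P x = Y"
proof -
  have "x \<in> A" using assms unfolding partition_on_def by auto
  then have "blk P x \<in> P" "x \<in> blk P x" using pblk[OF assms(1)] by auto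
  then show ?thesis using assms unfolding partition_on_def disjoint_def by blast
qed

lemma inD_edge:
  assumes "in_D sc t" "v \<in> verts t" "v \<noteq> vin t"
  shows "\<exists>e\<in>edges t. src t e = v \<or> tgt t e = v"
proof -
  have "vin t \<in> verts t" "connected_gm t" using assms by (auto simp: in_D_def graph_monomial_def)
  then have "(v, vin t) \<in> (uadj t \<union> (uadj t)\<inverse>)\<^sup>*" using assms(2) by (auto simp: connected_gm_def)
  then obtain z where "(v, z) \<in> uadj t \<union> (uadj t)\<inverse>" using assms(3) by (metis converse_rtranclE)
  then show ?thesis by (auto simp: uadj_def)
qed

theorem lemma2p27:
  fixes sc :: "complex \<Rightarrow> 'a::ring_1 \<Rightarrow> 'a" and phi :: "'a \<Rightarrow> complex"
    and t :: "('v, 'e, 'a) gm" and t' :: "('w, 'f, 'a) gm"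
    and \<pi> :: "('v + 'w) set set set set"
  assumes "tracial_ncps sc phi"
    and "in_D sc t" and "in_D sc t'"
    and "partition_on (verts (delta (gprod t t'))) \<pi>"
    and "\<forall>B\<in>\<pi>. \<forall>v\<in>verts t. \<forall>w\<in>verts t. vl t t' v \<in> B \<and> vl t t' w \<in> B \<longrightarrow> v = w"
    and "\<forall>B\<in>\<pi>. \<forall>v\<in>verts t'. \<forall>w\<in>verts t'. vr t t' v \<in> B \<and> vr t t' w \<in> B \<longrightarrow> v = w"
    and "oriented_cactus (quot (delta (gprod t t')) \<pi>)"
  shows "(\<forall>B\<in>\<pi>. \<exists>v\<in>verts t. \<exists>v'\<in>verts t'. B = {vl t t' v, vr t t' v'})
    \<and> blk \<pi> (vl t t' (vin t)) = {vl t t' (vin t)}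
    \<and> vl t t' (vin t) = vr t t' (vin t')
    \<and> (\<exists>f. bij_betw f (verts t) (verts t')
          \<and> (\<forall>v\<in>verts t. \<exists>B\<in>\<pi>. vl t t' v \<in> B \<and> vr t t' (f v) \<in> B)
          \<and> (\<forall>v\<in>verts t. \<forall>w\<in>verts t.
               (\<exists>e\<in>edges t. src t e = v \<and> tgt t e = w) \<longleftrightarrow>
               (\<exists>e\<in>edges t'. src t' e = f w \<and> tgt t' e = f v)))"
proof -
  note D1 = assms(2) and D2 = assms(3) and part = assms(4) and h5 = assms(5) and h6 = assms(6)
    and cac = assms(7)
  define V where "V = verts t"
  define V' where "V' = verts t'"
  define A0 where "A0 = Inl ` verts t \<union> Inr ` verts t'"
  define P0 where "P0 = prod_part t t'"
  define DP where "DP = delta_part (gprod t t')"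
  define r0 :: "'v + 'w" where "r0 = Inl (vin t)"
  define r1 :: "'v + 'w" where "r1 = Inr (vin t')"
  have gm1: "graph_monomial t" and gm2: "graph_monomial t'" and tr1: "is_tree t" and tr2: "is_tree t'"
    and io1: "vin t = vout t" and io2: "vin t' = vout t'"
    using D1 D2 by (auto simp: in_D_def)
  have root1: "vin t \<in> verts t" and root2: "vin t' \<in> verts t'" using gm1 gm2 by (auto simp: graph_monomial_def)
  have P0g: "P0 = glue_part A0 r0 r1" unfolding P0_def prod_part_def A0_def r0_def r1_def dunion_def using io2 by simp
  have r0A: "r0 \<in> A0" and r1A: "r1 \<in> A0" using root1 root2 unfolding A0_def r0_def r1_def by auto
  define r where "r = {r0, r1}"
  have blkP0r0: "blk P0 r0 = r" and blkP0r1: "blk P0 r1 = r" using blk_glue[OF r0A r0A r1A] blk_glue[OF r1A r0A r1A]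
    unfolding P0g r_def by auto
  have vg: "verts (gprod t t') = P0" "vin (gprod t t') = blk P0 r1" "vout (gprod t t') = blk P0 r0"
    unfolding gprod_def quot_def P0_def dunion_def r0_def r1_def using io1 by auto
  have rP0: "r \<in> P0" using blk_glue_in[OF r0A r0A r1A] blkP0r0 unfolding P0g by simp
  have DPg: "DP = glue_part P0 r r" unfolding DP_def delta_part_def vg blkP0r0 blkP0r1 by simp
  have vD: "verts (delta (gprod t t')) = DP" unfolding delta_def quot_def DP_def by simp
  have vl_eq: "vl t t' v = blk DP (blk P0 (Inl v))" for v unfolding vl_def DP_def P0_def by simp
  have vr_eq: "vr t t' v = blk DP (blk P0 (Inr v))" for v unfolding vr_def DP_def P0_def by simp
  have vlD: "vl t t' v \<in> verts (delta (gprod t t'))" if "v \<in> verts t" for v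
  proof -
    have "Inl v \<in> A0" using that A0_def by auto
    then have "blk P0 (Inl v) \<in> P0" using blk_glue_in[OF _ r0A r1A] P0g by simp
    then show ?thesis using blk_glue_in[OF _ rP0 rP0] vD DPg vl_eq by simp
  qed
  have vrD: "vr t t' v \<in> verts (delta (gprod t t'))" if "v \<in> verts t'" for v
  proof -
    have "Inr v \<in> A0" using that A0_def by auto
    then have "blk P0 (Inr v) \<in> P0" using blk_glue_in[OF _ r0A r1A] P0g by simp
    then show ?thesis using blk_glue_in[OF _ rP0 rP0] vD DPg vr_eq by simp
  qed
  have Dcases: "(\<exists>v\<in>verts t. y = vl t t' v) \<or> (\<exists>v\<in>verts t'. y = vr t t' v)"
    if yy: "y \<in> verts (delta (gprod t t'))" for y
  proof -
    obtain z where z: "z \<in> P0" "y = blk DP z" using glue_blk_surj[of y P0 r r] yy vD DPg rP0 by auto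
    obtain u where u: "u \<in> A0" "z = blk P0 u" using glue_blk_surj[of z A0 r0 r1] z P0g r0A r1A by auto
    show ?thesis
    proof (cases u)
      case (Inl v) then show ?thesis using u z vl_eq A0_def by auto
    next
      case (Inr v) then show ?thesis using u z vr_eq A0_def by auto
    qed
  qed
  have root_eq: "vl t t' (vin t) = vr t t' (vin t')"
    using vl_eq vr_eq blkP0r0 blkP0r1 unfolding r0_def r1_def by simp
  define al where "al = (\<lambda>v. blk \<pi> (vl t t' v))"
  define be where "be = (\<lambda>v. blk \<pi> (vr t t' v))"
  define G where "G = quot (delta (gprod t t')) \<pi>"
  have alP: "al v \<in> \<pi> \<and> vl t t' v \<in> al v" if "v \<in> verts t" for v
    using pblk[OF part vlD[OF that]] al_def by simp
  have beP: "be v \<in> \<pi> \<and> vr t t' v \<in> be v" if "v \<in> verts t'" for v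
    using pblk[OF part vrD[OF that]] be_def by simp
  have inj_al: "inj_on al (verts t)"
  proof (rule inj_onI)
    fix v w assume vw: "v \<in> verts t" "w \<in> verts t" "al v = al w"
    then have "vl t t' v \<in> al v" "vl t t' w \<in> al v" "al v \<in> \<pi>" using alP by auto
    then show "v = w" using h5 vw(1,2) by blast
  qed
  have inj_be: "inj_on be (verts t')"
  proof (rule inj_onI)
    fix v w assume vw: "v \<in> verts t'" "w \<in> verts t'" "be v = be w"
    then have "vr t t' v \<in> be v" "vr t t' w \<in> be v" "be v \<in> \<pi>" using beP by auto
    then show "v = w" using h6 vw(1,2) by blast
  qed
  have eG: "edges G = Inl ` edges t \<union> Inr ` edges t'"
    by (simp add: G_def quot_def delta_def gprod_def dunion_def)
  have s1: "src G (Inl e) = al (src t e)" "tgt G (Inl e) = al (tgt t e)" for e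
    by (simp_all add: G_def quot_def delta_def gprod_def dunion_def al_def vl_def)
  have s2: "src G (Inr e) = be (src t' e)" "tgt G (Inr e) = be (tgt t' e)" for e
    by (simp_all add: G_def quot_def delta_def gprod_def dunion_def be_def vr_def)
  have E: "emb2 G t t' al be Inl Inr"
  proof (unfold_locales)
    show "oriented_cactus G" using cac G_def by simp
  qed (use gm1 gm2 tr1 tr2 inj_al inj_be eG s1 s2 in auto)
  interpret A: emb2 G t t' al be Inl Inr by (rule E)
  interpret S: emb2 G t' t be al Inr Inl by (rule emb2_swap[OF E])
  have alr: "al (vin t) = be (vin t')" using root_eq al_def be_def by simp
  have M: "Bk \<in> al ` verts t \<and> Bk \<in> be ` verts t'" if Bk: "Bk \<in> \<pi>" for Bk
  proof -
    have "Bk \<noteq> {}" using part Bk unfolding partition_on_def by auto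
    then obtain x where x: "x \<in> Bk" by auto
    then have xD: "x \<in> verts (delta (gprod t t'))" using part Bk unfolding partition_on_def by auto
    have Bx: "Bk = blk \<pi> x" using pblk_eq[OF part Bk x] by simp
    show ?thesis
    proof (cases "\<exists>v\<in>verts t. x = vl t t' v")
      case True
      then obtain v where v: "v \<in> verts t" "x = vl t t' v" by auto
      then have Bv: "Bk = al v" using Bx al_def by simp
      have "Bk \<in> be ` verts t'"
      proof (rule ccontr)
        assume nb: "Bk \<notin> be ` verts t'"
        then have "v \<noteq> vin t" using Bv alr root2 by auto
        then obtain e0 where "e0 \<in> edges t" "src t e0 = v \<or> tgt t e0 = v" using inD_edge[OF D1 v(1)] by blast
        then have "indeg t v = 1 \<and> outdeg t v = 1" using A.partA[OF v(1)] nb Bv by simp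
        then show False using D1 v(1) unfolding in_D_def by blast
      qed
      then show ?thesis using Bv v by simp
    next
      case False
      then obtain v where v: "v \<in> verts t'" "x = vr t t' v" using Dcases[OF xD] by auto
      then have Bv: "Bk = be v" using Bx be_def by simp
      have "Bk \<in> al ` verts t"
      proof (rule ccontr)
        assume nb: "Bk \<notin> al ` verts t"
        then have "v \<noteq> vin t'" using Bv alr root1 by force
        then obtain e0 where "e0 \<in> edges t'" "src t' e0 = v \<or> tgt t' e0 = v" using inD_edge[OF D2 v(1)] by blast
        then have "indeg t' v = 1 \<and> outdeg t' v = 1" using S.partA[OF v(1)] nb Bv by simp
        then show False using D2 v(1) unfolding in_D_def by blast
      qed
      then show ?thesis using Bv v by simp
    qed
  qed
  have imA: "al ` verts t = \<pi>" using M alP by blast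
  have imB: "be ` verts t' = \<pi>" using M beP by blast
  have P1: "\<forall>Bk\<in>\<pi>. \<exists>v\<in>verts t. \<exists>v'\<in>verts t'. Bk = {vl t t' v, vr t t' v'}"
  proof
    fix Bk assume Bk: "Bk \<in> \<pi>"
    obtain v where v: "v \<in> verts t" "Bk = al v" using M[OF Bk] by auto
    obtain v' where v': "v' \<in> verts t'" "Bk = be v'" using M[OF Bk] by auto
    have "Bk = {vl t t' v, vr t t' v'}"
    proof (intro equalityI subsetI)
      fix y assume y: "y \<in> Bk"
      then have yD: "y \<in> verts (delta (gprod t t'))" using part Bk unfolding partition_on_def by auto
      show "y \<in> {vl t t' v, vr t t' v'}"
      proof (cases "\<exists>u\<in>verts t. y = vl t t' u")
        case True
        then obtain u where "u \<in> verts t" "y = vl t t' u" by auto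
        moreover have "vl t t' v \<in> Bk" using v alP by auto
        ultimately have "u = v" using h5 Bk y v(1) by blast
        then show ?thesis using \<open>y = vl t t' u\<close> by simp
      next
        case False
        then obtain u where "u \<in> verts t'" "y = vr t t' u" using Dcases[OF yD] by auto
        moreover have "vr t t' v' \<in> Bk" using v' beP by auto
        ultimately have "u = v'" using h6 Bk y v'(1) by blast
        then show ?thesis using \<open>y = vr t t' u\<close> by simp
      qed
    next
      fix y assume "y \<in> {vl t t' v, vr t t' v'}"
      then show "y \<in> Bk" using v v' alP beP by auto
    qed
    then show "\<exists>v\<in>verts t. \<exists>v'\<in>verts t'. Bk = {vl t t' v, vr t t' v'}" using v v' by blast
  qed
  have P2: "blk \<pi> (vl t t' (vin t)) = {vl t t' (vin t)}"
  proof -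
    define Bk where "Bk = al (vin t)"
    have Bk: "Bk \<in> \<pi>" "vl t t' (vin t) \<in> Bk" using alP[OF root1] Bk_def by auto
    obtain v v' where vv: "v \<in> verts t" "v' \<in> verts t'" "Bk = {vl t t' v, vr t t' v'}" using P1 Bk(1) by meson
    have "vl t t' v \<in> Bk" "vr t t' v' \<in> Bk" using vv(3) by auto
    moreover have "vr t t' (vin t') \<in> Bk" using Bk(2) root_eq by simp
    ultimately have "v = vin t" "v' = vin t'"
      using h5[rule_format, OF Bk(1) vv(1) root1] h6[rule_format, OF Bk(1) vv(2) root2] Bk(2) by simp_all
    then have "Bk = {vl t t' (vin t)}" using vv(3) root_eq by simp
    then show ?thesis using Bk_def al_def by simp
  qed
  define f where "f = inv_into (verts t') be \<circ> al"
  have fbe: "f v \<in> verts t' \<and> be (f v) = al v" if "v \<in> verts t" for v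
  proof -
    have "al v \<in> be ` verts t'" using imA imB that by blast
    then show ?thesis unfolding f_def comp_def by (simp add: inv_into_into f_inv_into_f)
  qed
  have bij: "bij_betw f (verts t) (verts t')"
  proof -
    have "bij_betw al (verts t) \<pi>" using inj_al imA by (simp add: bij_betw_def)
    moreover have "bij_betw (inv_into (verts t') be) \<pi> (verts t')"
      using bij_betw_inv_into[of be "verts t'" \<pi>] inj_be imB by (simp add: bij_betw_def)
    ultimately show ?thesis unfolding f_def by (rule bij_betw_trans)
  qed
  have P4b: "\<forall>v\<in>verts t. \<exists>Bk\<in>\<pi>. vl t t' v \<in> Bk \<and> vr t t' (f v) \<in> Bk"
  proof
    fix v assume v: "v \<in> verts t"
    then have "vr t t' (f v) \<in> be (f v)" "be (f v) = al v" using fbe beP by auto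
    then have "vr t t' (f v) \<in> al v" by simp
    then show "\<exists>Bk\<in>\<pi>. vl t t' v \<in> Bk \<and> vr t t' (f v) \<in> Bk" using alP[OF v] by blast
  qed
  have P4c: "(\<exists>e\<in>edges t. src t e = v \<and> tgt t e = w) \<longleftrightarrow> (\<exists>e\<in>edges t'. src t' e = f w \<and> tgt t' e = f v)"
    if v: "v \<in> verts t" and w: "w \<in> verts t" for v w
  proof
    assume "\<exists>e\<in>edges t. src t e = v \<and> tgt t e = w"
    then obtain e where e: "e \<in> edges t" "src t e = v" "tgt t e = w" by blast
    obtain e' where e': "e' \<in> edges t'" "be (src t' e') = al (tgt t e)" "be (tgt t' e') = al (src t e)"
      using emb2_partB[OF E _ e(1)] imA imB by auto
    have "be (src t' e') = be (f w)" "be (tgt t' e') = be (f v)" using e' e fbe v w by auto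
    moreover have "f w \<in> verts t'" "f v \<in> verts t'" using fbe v w by auto
    ultimately have "src t' e' = f w" "tgt t' e' = f v"
      using inj_be A.srcV2[OF e'(1)] A.tgtV2[OF e'(1)] by (auto dest: inj_onD)
    then show "\<exists>e\<in>edges t'. src t' e = f w \<and> tgt t' e = f v" using e' by blast
  next
    assume "\<exists>e\<in>edges t'. src t' e = f w \<and> tgt t' e = f v"
    then obtain e' where e': "e' \<in> edges t'" "src t' e' = f w" "tgt t' e' = f v" by blast
    obtain e where e: "e \<in> edges t" "al (src t e) = be (tgt t' e')" "al (tgt t e) = be (src t' e')"
      using emb2_partB[OF emb2_swap[OF E] _ e'(1)] imA imB by auto
    have "al (src t e) = al v" "al (tgt t e) = al w" using e e' fbe v w by auto
    then have "src t e = v" "tgt t e = w"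
      using inj_al A.srcV1[OF e(1)] A.tgtV1[OF e(1)] v w by (auto dest: inj_onD)
    then show "\<exists>e\<in>edges t. src t e = v \<and> tgt t e = w" using e by blast
  qed
  have P4: "\<exists>f. bij_betw f (verts t) (verts t')
          \<and> (\<forall>v\<in>verts t. \<exists>B\<in>\<pi>. vl t t' v \<in> B \<and> vr t t' (f v) \<in> B)
          \<and> (\<forall>v\<in>verts t. \<forall>w\<in>verts t.
               (\<exists>e\<in>edges t. src t e = v \<and> tgt t e = w) \<longleftrightarrow>
               (\<exists>e\<in>edges t'. src t' e = f w \<and> tgt t' e = f v))"
    by (rule exI[of _ f]) (intro conjI bij P4b ballI P4c)
  show ?thesis by (intro conjI P1 P2 root_eq P4)
qed

end
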